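(* Let $f$ be an $n$-variable Boolean function. Then $${AI}(f)=\min\Big(\min_{1\le k\le n}\mu_k(f+1),\ \min_{1\le k\le n}\mu_k(f)\Big).$$
   Context: An $n$-variable Boolean function is a map $\mathbb{F}_2^n\to\mathbb{F}_2$, with algebraic degree $\deg$ the degree of its algebraic normal form. ${LDA}(h)$ is the minimum algebraic degree of a nonzero $g$ with $h\cdot g=0$, and ${AI}(f)=\min({LDA}(f),{LDA}(1+f))$. For $1\le k\le n$, ${MUL}_k(h)=\{h\cdot g:\deg(g)\le k\}$ and $\mu_k(h)$ is the minimum algebraic degree of the nonzero elements of ${MUL}_k(h)$. *)

theory Defs
  imports "HOL-Analysis.Analysis" "HOL-Library.Extended_Nat"
begin

text \<open>Points of F_2^n are vectors bool^'n (n = CARD('n)); an n-variable Boolean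
function is a map bool^'n => bool. Addition in F_2 is xor, multiplication is conjunction,
the constant 0 is False and 1 + f is the pointwise negation of f.\<close>

text \<open>Evaluation of an algebraic normal form with coefficient family a (a S = True means
the monomial prod_{i in S} x_i occurs): the F_2-sum of the occurring monomials at x.\<close>
definition anf_eval :: "('n::finite set \<Rightarrow> bool) \<Rightarrow> bool^'n \<Rightarrow> bool" where
  "anf_eval a x = odd (card {S. a S \<and> (\<forall>i\<in>S. x $ i)})"

definition alg_deg :: "(bool^'n::finite \<Rightarrow> bool) \<Rightarrow> nat" where
  "alg_deg f = (LEAST d. \<exists>a. (\<forall>S. a S \<longrightarrow> card S \<le> d) \<and> f = anf_eval a)"

definition bf_zero :: "bool^'n::finite \<Rightarrow> bool" where
  "bf_zero = (\<lambda>x. False)"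

definition bf_mul :: "(bool^'n::finite \<Rightarrow> bool) \<Rightarrow> (bool^'n \<Rightarrow> bool) \<Rightarrow> (bool^'n \<Rightarrow> bool)" where
  "bf_mul h g = (\<lambda>x. h x \<and> g x)"

definition bf_add1 :: "(bool^'n::finite \<Rightarrow> bool) \<Rightarrow> (bool^'n \<Rightarrow> bool)" where
  "bf_add1 f = (\<lambda>x. \<not> f x)"

text \<open>Minimum over an empty set is infinity (Inf {} = \<infinity> in enat).\<close>
definition LDA :: "(bool^'n::finite \<Rightarrow> bool) \<Rightarrow> enat" where
  "LDA h = (INF g \<in> {g. g \<noteq> bf_zero \<and> bf_mul h g = bf_zero}. enat (alg_deg g))"

definition AI :: "(bool^'n::finite \<Rightarrow> bool) \<Rightarrow> enat" where
  "AI f = min (LDA f) (LDA (bf_add1 f))"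

definition MUL :: "nat \<Rightarrow> (bool^'n::finite \<Rightarrow> bool) \<Rightarrow> (bool^'n \<Rightarrow> bool) set" where
  "MUL k h = {bf_mul h g | g. alg_deg g \<le> k}"

definition mu :: "nat \<Rightarrow> (bool^'n::finite \<Rightarrow> bool) \<Rightarrow> enat" where
  "mu k h = (INF p \<in> {p \<in> MUL k h. p \<noteq> bf_zero}. enat (alg_deg p))"

end

theory Submission
  imports Defs
begin

lemma card_symdiff_parity:
  assumes "finite A" "finite B"
  shows "odd (card ((A - B) \<union> (B - A))) = (odd (card A) \<noteq> odd (card B))"
proof -
  have d: "card ((A - B) \<union> (B - A)) = card (A - B) + card (B - A)"
    using assms by (intro card_Un_disjoint) auto
  have "card A = card ((A - B) \<union> (A \<inter> B))" by (rule arg_cong[where f=card]) auto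
  also have "\<dots> = card (A - B) + card (A \<inter> B)"
    using assms by (intro card_Un_disjoint) auto
  finally have a: "card A = card (A - B) + card (A \<inter> B)" .
  have "card B = card ((B - A) \<union> (A \<inter> B))" by (rule arg_cong[where f=card]) auto
  also have "\<dots> = card (B - A) + card (A \<inter> B)"
    using assms by (intro card_Un_disjoint) auto
  finally have b: "card B = card (B - A) + card (A \<inter> B)" .
  show ?thesis unfolding d a b by presburger
qed

lemma anf_xor:
  "anf_eval (\<lambda>S. a S \<noteq> b S) x = (anf_eval a x \<noteq> anf_eval (b::'n::finite set \<Rightarrow> bool) x)"
proof -
  let ?A = "{S. a S \<and> (\<forall>i\<in>S. x $ i)}"
  let ?B = "{S. b S \<and> (\<forall>i\<in>S. x $ i)}"
  have "{S. (a S \<noteq> b S) \<and> (\<forall>i\<in>S. x $ i)} = (?A - ?B) \<union> (?B - ?A)" by auto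
  moreover have "finite ?A" "finite ?B" by (rule finite)+
  ultimately show ?thesis unfolding anf_eval_def by (simp only: card_symdiff_parity)
qed

lemma anf_delta:
  fixes y :: "bool^'n::finite"
  shows "anf_eval (\<lambda>S. {i. y $ i} \<subseteq> S) x = (x = y)"
proof -
  let ?Y = "{i. y $ i}" and ?X = "{i. x $ i}"
  have e: "{S. ?Y \<subseteq> S \<and> (\<forall>i\<in>S. x $ i)} = {S. ?Y \<subseteq> S \<and> S \<subseteq> ?X}" by auto
  show ?thesis
  proof (cases "x = y")
    case True
    then have "{S. ?Y \<subseteq> S \<and> S \<subseteq> ?X} = {?X}" by auto
    then show ?thesis using True e unfolding anf_eval_def by simp
  next
    case False
    then obtain j where j: "x $ j \<noteq> y $ j" by (auto simp: vec_eq_iff)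
    show ?thesis
    proof (cases "?Y \<subseteq> ?X")
      case False
      then have emp: "{S. ?Y \<subseteq> S \<and> S \<subseteq> ?X} = {}" by auto
      show ?thesis using \<open>x \<noteq> y\<close> unfolding anf_eval_def e emp by simp
    next
      case True
      then have jx: "x $ j" "\<not> y $ j" using j by auto
      let ?C = "{S. ?Y \<subseteq> S \<and> S \<subseteq> ?X}"
      let ?P = "{S \<in> ?C. j \<in> S}" and ?Q = "{S \<in> ?C. j \<notin> S}"
      have bij: "bij_betw (\<lambda>S. S - {j}) ?P ?Q"
        by (rule bij_betw_byWitness[where f'="insert j"]) (use jx in auto)
      have pq: "card ?P = card ?Q" using bij_betw_same_card[OF bij] .
      have "card ?C = card (?P \<union> ?Q)" by (rule arg_cong[where f=card]) auto
      also have "\<dots> = card ?P + card ?Q" by (intro card_Un_disjoint) auto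
      finally have "card ?C = card ?P + card ?Q" .
      then have ev: "even (card ?C)" using pq by presburger
      show ?thesis unfolding anf_eval_def e using ev \<open>x \<noteq> y\<close> by blast
    qed
  qed
qed

lemma anf_exists_set:
  fixes A :: "(bool^'n::finite) set"
  shows "\<exists>a. (\<lambda>x. x \<in> A) = anf_eval a"
proof -
  have "finite A" by simp
  then show ?thesis
  proof (induction A rule: finite_induct)
    case empty
    have "anf_eval (\<lambda>S. False) = (\<lambda>x. x \<in> {})" by (auto simp: anf_eval_def)
    then show ?case by metis
  next
    case (insert y A)
    then obtain a where a: "(\<lambda>x. x \<in> A) = anf_eval a" by blast
    have "anf_eval (\<lambda>S. a S \<noteq> ({i. y $ i} \<subseteq> S)) = (\<lambda>x. x \<in> insert y A)"
    proof
      fix x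
      show "anf_eval (\<lambda>S. a S \<noteq> ({i. y $ i} \<subseteq> S)) x = (x \<in> insert y A)"
      proof -
        have "(x \<in> A) = anf_eval a x" using a by metis
        then show ?thesis
          using anf_xor[of a "\<lambda>S. {i. y $ i} \<subseteq> S" x] anf_delta[of y x] insert(2)
          by auto
      qed
    qed
    then show ?case by metis
  qed
qed

lemma alg_deg_le:
  fixes g :: "bool^'n::finite \<Rightarrow> bool"
  shows "alg_deg g \<le> CARD('n)"
proof -
  obtain a where a: "(\<lambda>x. x \<in> {x. g x}) = anf_eval a" using anf_exists_set by blast
  have "g = anf_eval a" using a by auto
  moreover have "\<forall>S. a S \<longrightarrow> card S \<le> CARD('n)" by (simp add: card_mono)
  ultimately have "\<exists>a. (\<forall>S. a S \<longrightarrow> card S \<le> CARD('n)) \<and> g = anf_eval a" by blast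
  then show ?thesis unfolding alg_deg_def by (rule Least_le)
qed

lemma AI_le_mu:
  fixes h :: "bool^'n::finite \<Rightarrow> bool"
  shows "LDA (bf_add1 h) \<le> mu k h"
  unfolding mu_def LDA_def
proof (rule INF_greatest)
  fix p assume "p \<in> {p \<in> MUL k h. p \<noteq> bf_zero}"
  then obtain g where p: "p = bf_mul h g" "p \<noteq> bf_zero" by (auto simp: MUL_def)
  then have "p \<in> {g. g \<noteq> bf_zero \<and> bf_mul (bf_add1 h) g = bf_zero}"
    by (auto simp: bf_mul_def bf_add1_def bf_zero_def)
  then show "(INF g \<in> {g. g \<noteq> bf_zero \<and> bf_mul (bf_add1 h) g = bf_zero}. enat (alg_deg g))
      \<le> enat (alg_deg p)" by (rule INF_lower)
qed

lemma LDA_ge_mu: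
  fixes h :: "bool^'n::finite \<Rightarrow> bool"
  shows "mu CARD('n) (bf_add1 h) \<le> LDA h"
  unfolding mu_def LDA_def
proof (rule INF_greatest)
  fix g assume g: "g \<in> {g. g \<noteq> bf_zero \<and> bf_mul h g = bf_zero}"
  then have "g = bf_mul (bf_add1 h) g"
    by (auto simp: bf_mul_def bf_add1_def bf_zero_def fun_eq_iff)
  then have "g \<in> {p \<in> MUL CARD('n) (bf_add1 h). p \<noteq> bf_zero}"
    using g alg_deg_le[of g] unfolding MUL_def by blast
  then show "(INF p \<in> {p \<in> MUL CARD('n) (bf_add1 h). p \<noteq> bf_zero}. enat (alg_deg p))
      \<le> enat (alg_deg g)" by (rule INF_lower)
qed

theorem proposition10:
  fixes f :: "bool^'n::finite \<Rightarrow> bool"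
  shows "AI f = min (INF k \<in> {1..CARD('n)}. mu k (bf_add1 f)) (INF k \<in> {1..CARD('n)}. mu k f)"
proof (rule antisym)
  have ff: "bf_add1 (bf_add1 f) = f" by (simp add: bf_add1_def)
  have n: "CARD('n) \<in> {1..CARD('n)}" by (simp add: Suc_leI)
  have 1: "AI f \<le> (INF k \<in> {1..CARD('n)}. mu k (bf_add1 f))"
  proof (rule INF_greatest)
    fix k show "AI f \<le> mu k (bf_add1 f)"
      using AI_le_mu[of "bf_add1 f" k] ff unfolding AI_def by (metis min.coboundedI1)
  qed
  have 2: "AI f \<le> (INF k \<in> {1..CARD('n)}. mu k f)"
  proof (rule INF_greatest)
    fix k show "AI f \<le> mu k f"
      using AI_le_mu[of f k] unfolding AI_def by (metis min.coboundedI2)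
  qed
  show "AI f \<le> min (INF k \<in> {1..CARD('n)}. mu k (bf_add1 f)) (INF k \<in> {1..CARD('n)}. mu k f)"
    using 1 2 by simp
  have 3: "(INF k \<in> {1..CARD('n)}. mu k (bf_add1 f)) \<le> LDA f"
    using INF_lower[OF n, of "\<lambda>k. mu k (bf_add1 f)"] LDA_ge_mu[of f] by (rule order_trans)
  have 4: "(INF k \<in> {1..CARD('n)}. mu k f) \<le> LDA (bf_add1 f)"
    using INF_lower[OF n, of "\<lambda>k. mu k f"] LDA_ge_mu[of "bf_add1 f"] ff by (metis order_trans)
  show "min (INF k \<in> {1..CARD('n)}. mu k (bf_add1 f)) (INF k \<in> {1..CARD('n)}. mu k f) \<le> AI f"
    using 3 4 unfolding AI_def by (simp add: min.coboundedI1 min.coboundedI2)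
qed

end
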